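(* Let $0<q<1$, $I=[0,b)$ with $0<b\le\infty$, and let $u_0:I\to\mathbb{R}$ be continuous with $1+(1-q)yu_0(y)>0$ and $1-(1-q)yu_0(qy)>0$ for all $y\in I$. Put $V_0(x)=\partial_qu_0(x)+u_0(x)u_0(qx)$ and, for $t\in\mathbb{R}$, $$w_t(x)=\frac{t\exp\Big(\frac{1}{1-q}\int_0^x\frac1y\ln\frac{1+(1-q)yu_0(y)}{1-(1-q)yu_0(qy)}d_qy\Big)}{1+t\int_0^x\frac{1}{1+(1-q)yu_0(y)}\exp\Big(\frac{1}{1-q}\int_0^y\frac1s\ln\frac{1+(1-q)su_0(s)}{1-(1-q)su_0(qs)}d_qs\Big)d_qy},\qquad u(t,x)=u_0(x)-w_t(x),$$ assuming the denominator does not vanish on $I$. Then, for $x\in I\setminus\{0\}$, $$-\partial_qu(t,x)+u(t,x)u(t,qx)=-\partial_qu_0(x)+u_0(x)u_0(qx),$$ and $$\partial_qu(t,x)+u(t,x)u(t,qx)=V_0(x)-2\,\partial_qw_t(x).$$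
   Context: $\partial_q f(x)=\dfrac{f(x)-f(qx)}{(1-q)x}$ for $x\neq0$ (applied in the variable $x$); $\int_0^x f(t)\,d_qt=\sum_{n\ge0}(1-q)q^nx\,f(q^nx)$ (Jackson $q$-integral). *)

theory Defs
  imports "HOL-Analysis.Analysis"
begin

text \<open>q-derivative (in the variable x), meaningful for x \<noteq> 0.\<close>
definition qderiv :: "real \<Rightarrow> (real \<Rightarrow> real) \<Rightarrow> real \<Rightarrow> real" where
  "qderiv q f x = (f x - f (q * x)) / ((1 - q) * x)"

definition jackson_qint :: "real \<Rightarrow> (real \<Rightarrow> real) \<Rightarrow> real \<Rightarrow> real" where
  "jackson_qint q f x = (\<Sum>n. (1 - q) * q ^ n * x * f (q ^ n * x))"

definition qexpo :: "real \<Rightarrow> (real \<Rightarrow> real) \<Rightarrow> real \<Rightarrow> real" where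
  "qexpo q u0 x = (1 / (1 - q)) * jackson_qint q
     (\<lambda>y. (1 / y) * ln ((1 + (1 - q) * y * u0 y) / (1 - (1 - q) * y * u0 (q * y)))) x"

definition qdenom :: "real \<Rightarrow> (real \<Rightarrow> real) \<Rightarrow> real \<Rightarrow> real \<Rightarrow> real" where
  "qdenom q u0 t x = 1 + t * jackson_qint q (\<lambda>y. exp (qexpo q u0 y) / (1 + (1 - q) * y * u0 y)) x"

definition wt :: "real \<Rightarrow> (real \<Rightarrow> real) \<Rightarrow> real \<Rightarrow> real \<Rightarrow> real" where
  "wt q u0 t x = t * exp (qexpo q u0 x) / qdenom q u0 t x"

end

theory Submission
  imports Defs
begin

lemma jq_split:
  assumes q0: "0 < q" and q1: "q < 1" and K: "\<forall>n. \<bar>f (q^n*x)\<bar> \<le> K"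
  shows "jackson_qint q f x = (1-q)*x*f x + jackson_qint q f (q*x)"
proof -
  let ?g = "\<lambda>n. (1 - q) * q ^ n * x * f (q ^ n * x)"
  have "summable (\<lambda>n. ((1-q)*\<bar>x\<bar>*K) * q^n)"
    using q0 q1 by (intro summable_mult summable_geometric) auto
  moreover have "norm (?g n) \<le> ((1-q)*\<bar>x\<bar>*K) * q^n" for n
  proof -
    have "norm (?g n) = ((1-q)*\<bar>x\<bar>) * q^n * \<bar>f (q^n*x)\<bar>"
      using q0 q1 by (simp add: abs_mult)
    also have "\<dots> \<le> ((1-q)*\<bar>x\<bar>) * q^n * K"
      using K q0 q1 by (intro mult_left_mono) auto
    finally show ?thesis by (simp add: algebra_simps)
  qed
  ultimately have s: "summable ?g"
    by (rule summable_comparison_test'[where N=0])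
  have "suminf ?g = ?g 0 + suminf (\<lambda>n. ?g (Suc n))"
    using suminf_split_head[OF s] by simp
  moreover have "(\<lambda>n. ?g (Suc n)) = (\<lambda>n. (1 - q) * q ^ n * (q*x) * f (q ^ n * (q*x)))"
    by (auto simp: algebra_simps)
  ultimately show ?thesis unfolding jackson_qint_def by simp
qed

lemma jq_bound:
  assumes q0: "0 < q" and q1: "q < 1" and K: "\<forall>n. \<bar>f (q^n*x)\<bar> \<le> K"
  shows "\<bar>jackson_qint q f x\<bar> \<le> \<bar>x\<bar> * K"
proof -
  let ?g = "\<lambda>n. (1 - q) * q ^ n * x * f (q ^ n * x)"
  have sg: "summable (\<lambda>n. ((1-q)*\<bar>x\<bar>*K) * q^n)"
    using q0 q1 by (intro summable_mult summable_geometric) auto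
  have b: "norm (?g n) \<le> ((1-q)*\<bar>x\<bar>*K) * q^n" for n
  proof -
    have "norm (?g n) = ((1-q)*\<bar>x\<bar>) * q^n * \<bar>f (q^n*x)\<bar>"
      using q0 q1 by (simp add: abs_mult)
    also have "\<dots> \<le> ((1-q)*\<bar>x\<bar>) * q^n * K"
      using K q0 q1 by (intro mult_left_mono) auto
    finally show ?thesis by (simp add: algebra_simps)
  qed
  have "norm (suminf ?g) \<le> (\<Sum>n. ((1-q)*\<bar>x\<bar>*K) * q^n)"
    by (rule norm_suminf_le[OF b sg])
  also have "\<dots> = ((1-q)*\<bar>x\<bar>*K) * (1/(1-q))"
    using q0 q1 by (subst suminf_mult) (auto simp: suminf_geometric)
  also have "\<dots> = \<bar>x\<bar> * K" using q1 by simp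
  finally show ?thesis unfolding jackson_qint_def by simp
qed

lemma key_alg:
  fixes c x t E Eq D Dq P N u0x u0q :: real
  assumes P: "P = 1 + c*x*u0x" and N: "N = 1 - c*x*u0q" and Pp: "P > 0" and Np: "N > 0"
    and E: "E = Eq * (P/N)" and D: "D = Dq + t*(c*x*(E/P))" and Dn: "D \<noteq> 0" and Dqn: "Dq \<noteq> 0"
  shows "t*E/D - t*Eq/Dq = c*x*(u0x*(t*Eq/Dq) + (t*E/D)*u0q - (t*E/D)*(t*Eq/Dq))"
proof -
  have EN: "E*N = Eq*P" using E Np by simp
  have DP: "D*P = Dq*P + t*c*x*E" using D Pp by (simp add: field_simps)
  have "(t*E/D - t*Eq/Dq)*(D*Dq*P) = (c*x*(u0x*(t*Eq/Dq) + (t*E/D)*u0q - (t*E/D)*(t*Eq/Dq)))*(D*Dq*P)"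
  proof -
    have l: "(t*E/D - t*Eq/Dq)*(D*Dq*P) = t*E*Dq*P - t*Eq*(D*P)" using Dn Dqn by (simp add: field_simps)
    have r: "(c*x*(u0x*(t*Eq/Dq) + (t*E/D)*u0q - (t*E/D)*(t*Eq/Dq)))*(D*Dq*P)
       = c*x*(u0x*t*Eq*(D*P) + t*E*u0q*Dq*P - t*E*t*Eq*P)" using Dn Dqn by (simp add: field_simps)
    have "t*E*Dq*P - t*Eq*(D*P) = c*x*(u0x*t*Eq*(D*P) + t*E*u0q*Dq*P - t*E*t*Eq*P)"
      unfolding DP
    proof -
      have EN': "E*(1 - c*x*u0q) = Eq*(1 + c*x*u0x)" using EN P N by simp
      show "t*E*Dq*P - t*Eq*(Dq*P + t*c*x*E) = c*x*(u0x*t*Eq*(Dq*P + t*c*x*E) + t*E*u0q*Dq*P - t*E*t*Eq*P)"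
        unfolding P using EN' by algebra
    qed
    then show ?thesis using l r by linarith
  qed
  then show ?thesis using Dn Dqn Pp by simp
qed

lemma ln_ratio_bound:
  fixes P N m B :: real
  assumes "P \<ge> m" "N \<ge> m" "m > 0" "\<bar>P - N\<bar> \<le> B"
  shows "\<bar>ln (P/N)\<bar> \<le> B/m"
proof -
  have Pp: "P > 0" "N > 0" using assms by auto
  have B0: "B \<ge> 0" using assms(4) by linarith
  have u: "ln (P/N) \<le> P/N - 1" using Pp by (intro ln_le_minus_one) auto
  have "ln (N/P) \<le> N/P - 1" using Pp by (intro ln_le_minus_one) auto
  hence l: "- ln (P/N) \<le> N/P - 1" using Pp by (simp add: ln_div)
  have "P/N - 1 = (P - N)/N" using Pp by (simp add: field_simps)
  also have "\<dots> \<le> \<bar>P - N\<bar>/N" using Pp by (intro divide_right_mono) auto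
  also have "\<dots> \<le> B/N" using Pp assms(4) by (intro divide_right_mono) auto
  also have "\<dots> \<le> B/m" using Pp assms B0 by (intro divide_left_mono) auto
  finally have 1: "ln (P/N) \<le> B/m" using u by linarith
  have "N/P - 1 = (N - P)/P" using Pp by (simp add: field_simps)
  also have "\<dots> \<le> \<bar>P - N\<bar>/P" using Pp by (intro divide_right_mono) auto
  also have "\<dots> \<le> B/P" using Pp assms(4) by (intro divide_right_mono) auto
  also have "\<dots> \<le> B/m" using Pp assms B0 by (intro divide_left_mono) auto
  finally have 2: "- ln (P/N) \<le> B/m" using l by linarith
  show ?thesis using 1 2 by linarith
qed

theorem mainTheorem8:
  fixes q t x :: real and b :: ereal and u0 :: "real \<Rightarrow> real"
  assumes q0: "0 < q" and q1: "q < 1" and b0: "0 < b"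
    and cont: "continuous_on {y. 0 \<le> y \<and> ereal y < b} u0"
    and pos: "\<forall>y. 0 \<le> y \<and> ereal y < b \<longrightarrow>
                 1 + (1 - q) * y * u0 y > 0 \<and> 1 - (1 - q) * y * u0 (q * y) > 0"
    and nz: "\<forall>y. 0 \<le> y \<and> ereal y < b \<longrightarrow> qdenom q u0 t y \<noteq> 0"
    and x0: "0 < x" and xb: "ereal x < b"
  shows "- qderiv q (\<lambda>y. u0 y - wt q u0 t y) x
           + (u0 x - wt q u0 t x) * (u0 (q * x) - wt q u0 t (q * x))
         = - qderiv q u0 x + u0 x * u0 (q * x)
       \<and> qderiv q (\<lambda>y. u0 y - wt q u0 t y) x
           + (u0 x - wt q u0 t x) * (u0 (q * x) - wt q u0 t (q * x))
         = (qderiv q u0 x + u0 x * u0 (q * x)) - 2 * qderiv q (wt q u0 t) x"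
proof -
  define c where "c = 1 - q"
  have c0: "c > 0" using q1 c_def by simp
  define S where "S = {0..x}"
  have inS: "0 \<le> y \<and> ereal y < b" if "y \<in> S" for y
    using that xb unfolding S_def by (auto intro: le_less_trans[of "ereal y" "ereal x" b])
  have qS: "q*y \<in> S" if "y \<in> S" for y
  proof -
    have "q*y \<le> 1*y" using that q1 unfolding S_def by (intro mult_right_mono) auto
    thus ?thesis using that q0 unfolding S_def by auto
  qed
  have cS: "continuous_on S u0"
    by (rule continuous_on_subset[OF cont]) (use inS in auto)
  have cSq: "continuous_on S (\<lambda>y. u0 (q*y))"
    by (rule continuous_on_compose2[OF cS]) (auto intro!: continuous_intros qS)
  define Pf where "Pf y = 1 + c*y*u0 y" for y
  define Nf where "Nf y = 1 - c*y*u0 (q*y)" for y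
  have PNpos: "Pf y > 0 \<and> Nf y > 0" if "y \<in> S" for y
    using pos inS[OF that] unfolding Pf_def Nf_def c_def by auto
  have cmin: "continuous_on S (\<lambda>y. min (Pf y) (Nf y))"
    unfolding Pf_def Nf_def by (intro continuous_intros cS cSq)
  have Sne: "S \<noteq> {}" "compact S" using x0 unfolding S_def by auto
  obtain y0 where y0: "y0 \<in> S" "\<forall>y\<in>S. min (Pf y0) (Nf y0) \<le> min (Pf y) (Nf y)"
    using continuous_attains_inf[OF Sne(2) Sne(1) cmin] by blast
  define m where "m = min (Pf y0) (Nf y0)"
  have m0: "m > 0" using PNpos[OF y0(1)] m_def by simp
  have mP: "Pf y \<ge> m" "Nf y \<ge> m" if "y \<in> S" for y using y0(2) that m_def by auto
  have cabs: "continuous_on S (\<lambda>y. \<bar>u0 y\<bar>)" by (intro continuous_intros cS)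
  obtain y1 where y1: "y1 \<in> S" "\<forall>y\<in>S. \<bar>u0 y\<bar> \<le> \<bar>u0 y1\<bar>"
    using continuous_attains_sup[OF Sne(2) Sne(1) cabs] by blast
  define M where "M = \<bar>u0 y1\<bar>"
  have M: "\<bar>u0 y\<bar> \<le> M" if "y \<in> S" for y using y1 that M_def by auto
  define f1 where "f1 y = (1 / y) * ln ((1 + (1 - q) * y * u0 y) / (1 - (1 - q) * y * u0 (q * y)))" for y
  have f1e: "f1 y = (1/y) * ln (Pf y / Nf y)" for y unfolding f1_def Pf_def Nf_def c_def by simp
  define K1 where "K1 = 2*c*M/m"
  have f1b: "\<bar>f1 y\<bar> \<le> K1" if "y \<in> S" "y > 0" for y
  proof -
    have "\<bar>Pf y - Nf y\<bar> = c*y*\<bar>u0 y + u0 (q*y)\<bar>"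
    proof -
      have "Pf y - Nf y = c*y*(u0 y + u0 (q*y))" unfolding Pf_def Nf_def by (simp add: algebra_simps)
      thus ?thesis using c0 that by (simp add: abs_mult)
    qed
    also have "\<dots> \<le> c*y*(2*M)"
      using M[OF that(1)] M[OF qS[OF that(1)]] c0 that by (intro mult_left_mono) auto
    finally have "\<bar>ln (Pf y / Nf y)\<bar> \<le> c*y*(2*M)/m"
      by (intro ln_ratio_bound mP that m0)
    hence "\<bar>ln (Pf y / Nf y)\<bar> / y \<le> c*y*(2*M)/m/y" using that by (intro divide_right_mono) auto
    moreover have "c*(2*M)/m = 2*c*M/m" by simp
    ultimately show ?thesis using that unfolding f1e K1_def by (simp add: abs_mult)
  qed
  have powS: "q^n*y \<in> S \<and> q^n*y > 0" if "y \<in> S" "y > 0" for y n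
  proof (induction n)
    case 0 then show ?case using that by simp
  next
    case (Suc n) then show ?case using qS[of "q^n*y"] q0 by (simp add: mult.assoc)
  qed
  have f1pow: "\<forall>n. \<bar>f1 (q^n*y)\<bar> \<le> K1" if "y \<in> S" "y > 0" for y
    using f1b powS that by blast
  have qexpo_eq: "qexpo q u0 y = (1/c) * jackson_qint q f1 y" for y
    unfolding qexpo_def f1_def c_def by simp
  have qexpo_split: "qexpo q u0 y = qexpo q u0 (q*y) + ln (Pf y / Nf y)" if "y \<in> S" "y > 0" for y
  proof -
    have "qexpo q u0 y = (1/c) * ((1-q)*y*f1 y + jackson_qint q f1 (q*y))"
      unfolding qexpo_eq using jq_split[OF q0 q1 f1pow[OF that]] by simp
    also have "\<dots> = qexpo q u0 (q*y) + ln (Pf y / Nf y)"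
    proof -
      have "1 - q = c" using c_def by simp
      hence "(1-q)*y*f1 y = c * ln (Pf y / Nf y)" unfolding f1e using that by simp
      thus ?thesis unfolding qexpo_eq using c0 by (simp add: field_simps)
    qed
    finally show ?thesis .
  qed
  have qexpo_b: "\<bar>qexpo q u0 y\<bar> \<le> x*K1/c" if "y \<in> S" "y > 0" for y
  proof -
    have "\<bar>jackson_qint q f1 y\<bar> \<le> \<bar>y\<bar>*K1" by (rule jq_bound[OF q0 q1 f1pow[OF that]])
    also have "\<dots> \<le> x*K1"
      using that S_def K1_def c0 m0 M[OF that(1)] by (intro mult_right_mono) auto
    finally show ?thesis unfolding qexpo_eq using c0 by (simp add: abs_mult field_simps)
  qed
  define g where "g y = exp (qexpo q u0 y) / (1 + (1 - q) * y * u0 y)" for y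
  define K2 where "K2 = exp (x*K1/c) / m"
  have gb: "\<bar>g y\<bar> \<le> K2" if "y \<in> S" "y > 0" for y
  proof -
    have Pp: "Pf y \<ge> m" using mP that by auto
    have "\<bar>g y\<bar> = exp (qexpo q u0 y) / Pf y"
      unfolding g_def Pf_def c_def using PNpos[OF that(1)] unfolding Pf_def c_def by simp
    also have "\<dots> \<le> exp (x*K1/c) / Pf y"
      using qexpo_b[OF that] PNpos[OF that(1)] by (intro divide_right_mono) auto
    also have "\<dots> \<le> K2" unfolding K2_def using Pp m0 by (intro divide_left_mono) auto
    finally show ?thesis .
  qed
  have gpow: "\<forall>n. \<bar>g (q^n*x)\<bar> \<le> K2"
    using gb powS[of x] x0 S_def by auto
  have xS: "x \<in> S" using x0 S_def by auto
  have den_split: "qdenom q u0 t x = qdenom q u0 t (q*x) + t*(c*x*(exp (qexpo q u0 x)/Pf x))"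
  proof -
    have "qdenom q u0 t x = 1 + t * jackson_qint q g x" unfolding qdenom_def g_def by simp
    also have "\<dots> = 1 + t * ((1-q)*x*g x + jackson_qint q g (q*x))"
      using jq_split[OF q0 q1 gpow] by simp
    also have "\<dots> = qdenom q u0 t (q*x) + t*(c*x*(exp (qexpo q u0 x)/Pf x))"
      unfolding qdenom_def g_def Pf_def c_def by (simp add: algebra_simps)
    finally show ?thesis .
  qed
  have E_split: "exp (qexpo q u0 x) = exp (qexpo q u0 (q*x)) * (Pf x / Nf x)"
    using qexpo_split[OF xS x0] PNpos[OF xS] by (simp add: exp_add)
  have Dn: "qdenom q u0 t x \<noteq> 0" using nz inS[OF xS] by auto
  have Dqn: "qdenom q u0 t (q*x) \<noteq> 0" using nz inS[OF qS[OF xS]] by auto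
  have key: "wt q u0 t x - wt q u0 t (q*x) = c*x*(u0 x * wt q u0 t (q*x) + wt q u0 t x * u0 (q*x) - wt q u0 t x * wt q u0 t (q*x))"
    unfolding wt_def
    by (rule key_alg[OF Pf_def Nf_def _ _ E_split den_split Dn Dqn]) (use PNpos[OF xS] in auto)
  have qd: "qderiv q (wt q u0 t) x = u0 x * wt q u0 t (q*x) + wt q u0 t x * u0 (q*x) - wt q u0 t x * wt q u0 t (q*x)"
    unfolding qderiv_def using key c0 x0 c_def by (simp add: field_simps)
  have qdu: "qderiv q (\<lambda>y. u0 y - wt q u0 t y) x = qderiv q u0 x - qderiv q (wt q u0 t) x"
  proof -
    have "u0 x - wt q u0 t x - (u0 (q*x) - wt q u0 t (q*x)) = (u0 x - u0 (q*x)) - (wt q u0 t x - wt q u0 t (q*x))" by simp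
    thus ?thesis unfolding qderiv_def by (simp only: diff_divide_distrib[symmetric])
  qed
  show ?thesis unfolding qdu qd by (simp add: algebra_simps)
qed

end
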